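(* Let $u,v$ be positive real numbers. Then $$\sum_{\substack{j\in\mathbb{Z}\\ \frac12-v\le j\le u-\frac12}}\frac{1}{\sqrt{(u-j)(v+j)}}\le 12.$$ *)

theory Defs
  imports Complex_Main
begin

end

theory Submission
  imports Defs
begin

lemma key_ineq:
  fixes y :: real
  assumes "y \<ge> 1/2"
  shows "2 * sqrt (y - 1/2) + 1 / sqrt y \<le> 2 * sqrt (y + 1/2)"
proof -
  define p where "p = sqrt (y + 1/2)"
  define q where "q = sqrt (y - 1/2)"
  define r where "r = sqrt y"
  have p2: "p^2 = y + 1/2" using assms by (simp add: p_def)
  have q2: "q^2 = y - 1/2" using assms by (simp add: q_def)
  have r2: "r^2 = y" using assms by (simp add: r_def)
  have pp: "p > 0" using assms by (simp add: p_def)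
  have qq: "q \<ge> 0" using assms by (simp add: q_def)
  have rr: "r > 0" using assms by (simp add: r_def)
  have "(p*q)^2 = (y+1/2)*(y-1/2)" by (simp add: power_mult_distrib p2 q2)
  also have "\<dots> \<le> (r^2)^2" using r2 by (simp add: power2_eq_square algebra_simps)
  finally have "(p*q)^2 \<le> (r^2)^2" .
  hence pq: "p*q \<le> r^2" using pp qq rr
    by (meson power2_le_imp_le zero_le_power2 mult_nonneg_nonneg less_imp_le)
  have "(p+q)^2 \<le> (2*r)^2" using p2 q2 r2 pq by (simp add: power2_eq_square algebra_simps)
  hence s: "p + q \<le> 2*r" using pp qq rr by (meson power2_le_imp_le less_imp_le mult_nonneg_nonneg zero_le_numeral)
  have d: "(p - q) * (p + q) = 1" using p2 q2 by (simp add: power2_eq_square algebra_simps)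
  have "1 \<le> (p - q) * (2 * r)"
  proof -
    have "p - q \<ge> 0" using d pp qq by (smt (verit) mult_nonpos_nonneg)
    hence "(p - q) * (p + q) \<le> (p - q) * (2*r)" using s by (simp add: mult_left_mono)
    thus ?thesis using d by simp
  qed
  hence "1 / r \<le> 2 * (p - q)" using rr by (simp add: field_simps)
  thus ?thesis unfolding p_def q_def r_def by simp
qed

lemma sum_up:
  fixes c :: real and a b :: int
  assumes "c + a \<ge> 1/2" and "a - 1 \<le> b"
  shows "(\<Sum>j\<in>{a..b}. 1 / sqrt (c + j)) \<le> 2 * sqrt (c + b + 1/2)"
  using assms(2)
proof (induction b rule: int_ge_induct)
  case base
  then show ?case using assms(1) by simp
next
  case (step i)
  have ins: "{a..i+1} = insert (i+1) {a..i}" using step.hyps by auto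
  have "(\<Sum>j\<in>{a..i+1}. 1 / sqrt (c + j)) = 1 / sqrt (c + (i+1)) + (\<Sum>j\<in>{a..i}. 1 / sqrt (c + j))"
    unfolding ins by simp
  also have "\<dots> \<le> 1 / sqrt (c + (i+1)) + 2 * sqrt (c + i + 1/2)" using step.IH by simp
  also have "\<dots> \<le> 2 * sqrt (c + (i+1) + 1/2)"
    using key_ineq[of "c + (i+1)"] step.hyps assms(1) by (simp add: algebra_simps)
  finally show ?case by simp
qed

lemma sum_down:
  fixes c :: real and a b :: int
  assumes "c - b \<ge> 1/2" and "a \<le> b + 1"
  shows "(\<Sum>j\<in>{a..b}. 1 / sqrt (c - j)) \<le> 2 * sqrt (c - a + 1/2)"
  using assms(2)
proof (induction a rule: int_le_induct)
  case base
  then show ?case using assms(1) by simp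
next
  case (step i)
  have ins: "{i-1..b} = insert (i-1) {i..b}" using step.hyps by auto
  have "(\<Sum>j\<in>{i-1..b}. 1 / sqrt (c - j)) = 1 / sqrt (c - (i-1)) + (\<Sum>j\<in>{i..b}. 1 / sqrt (c - j))"
    unfolding ins by simp
  also have "\<dots> \<le> 1 / sqrt (c - (i-1)) + 2 * sqrt (c - i + 1/2)" using step.IH by simp
  also have "\<dots> \<le> 2 * sqrt (c - (i-1) + 1/2)"
    using key_ineq[of "c - (i-1)"] step.hyps assms(1) by (simp add: algebra_simps)
  finally show ?case by simp
qed

lemma term_bound:
  fixes x y :: real
  assumes "x > 0" "y > 0"
  shows "1 / sqrt (x * y) \<le> sqrt 2 / sqrt (x + y) * (1 / sqrt x + 1 / sqrt y)"
proof -
  have gen: "1 / sqrt (a * b) \<le> sqrt 2 / sqrt (a + b) * (1 / sqrt a)"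
    if "0 < a" "a \<le> b" for a b :: real
  proof -
    have "sqrt (a + b) \<le> sqrt 2 * sqrt b"
      using that by (simp add: real_sqrt_mult[symmetric])
    hence "sqrt (a + b) * sqrt a \<le> sqrt 2 * (sqrt a * sqrt b)"
      using that by (simp add: mult_right_mono algebra_simps)
    thus ?thesis using that by (simp add: real_sqrt_mult field_simps)
  qed
  have pos: "sqrt 2 / sqrt (x + y) * (1 / sqrt x) \<ge> 0" "sqrt 2 / sqrt (x + y) * (1 / sqrt y) \<ge> 0"
    using assms by auto
  show ?thesis
  proof (cases "x \<le> y")
    case True
    have "1 / sqrt (x * y) \<le> sqrt 2 / sqrt (x + y) * (1 / sqrt x)" using gen[of x y] assms True by simp
    then show ?thesis using pos(2) unfolding distrib_left by linarith
  next
    case False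
    have "1 / sqrt (x * y) \<le> sqrt 2 / sqrt (x + y) * (1 / sqrt y)" using gen[of y x] assms False
      by (simp add: mult.commute add.commute)
    then show ?thesis using pos(1) unfolding distrib_left by linarith
  qed
qed

theorem lemma6p7:
  fixes u v :: real
  assumes "u > 0" and "v > 0"
  shows "(\<Sum>j\<in>{j::int. 1/2 - v \<le> real_of_int j \<and> real_of_int j \<le> u - 1/2}.
            1 / sqrt ((u - real_of_int j) * (v + real_of_int j))) \<le> 12"
proof -
  define a where "a = \<lceil>1/2 - v\<rceil>"
  define b where "b = \<lfloor>u - 1/2\<rfloor>"
  have S: "{j::int. 1/2 - v \<le> real_of_int j \<and> real_of_int j \<le> u - 1/2} = {a..b}"
    unfolding a_def b_def by (auto simp: ceiling_le_iff le_floor_iff)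
  show ?thesis
  proof (cases "a \<le> b")
    case False
    then show ?thesis unfolding S by simp
  next
    case True
    have ha: "real_of_int a \<ge> 1/2 - v" unfolding a_def by simp
    have hb: "real_of_int b \<le> u - 1/2" unfolding b_def by simp
    have s0: "u + v > 0" using assms by simp
    define K where "K = sqrt 2 / sqrt (u + v)"
    have K0: "K \<ge> 0" unfolding K_def using s0 by (intro divide_nonneg_nonneg) auto
    have "(\<Sum>j\<in>{a..b}. 1 / sqrt ((u - j) * (v + j)))
        \<le> (\<Sum>j\<in>{a..b}. K * (1 / sqrt (u - j) + 1 / sqrt (v + j)))"
    proof (rule sum_mono)
      fix j assume "j \<in> {a..b}"
      hence "real_of_int j \<ge> real_of_int a" "real_of_int j \<le> real_of_int b" by auto
      hence "u - j > 0" "v + j > 0" using ha hb by linarith+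
      thus "1 / sqrt ((u - j) * (v + j)) \<le> K * (1 / sqrt (u - j) + 1 / sqrt (v + j))"
        using term_bound[of "u - j" "v + j"] unfolding K_def by simp
    qed
    also have "\<dots> = K * ((\<Sum>j\<in>{a..b}. 1 / sqrt (u - j)) + (\<Sum>j\<in>{a..b}. 1 / sqrt (v + j)))"
      by (simp add: sum.distrib distrib_left sum_distrib_left)
    also have "\<dots> \<le> K * (2 * sqrt (u + v) + 2 * sqrt (u + v))"
    proof -
      have "(\<Sum>j\<in>{a..b}. 1 / sqrt (u - j)) \<le> 2 * sqrt (u - a + 1/2)"
        using sum_down[where c=u and a=a and b=b] hb True by simp
      also have "\<dots> \<le> 2 * sqrt (u + v)" using ha by simp
      finally have 1: "(\<Sum>j\<in>{a..b}. 1 / sqrt (u - j)) \<le> 2 * sqrt (u + v)" .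
      have "(\<Sum>j\<in>{a..b}. 1 / sqrt (v + j)) \<le> 2 * sqrt (v + b + 1/2)"
        using sum_up[where c=v and a=a and b=b] ha True by simp
      also have "\<dots> \<le> 2 * sqrt (u + v)" using hb by simp
      finally have 2: "(\<Sum>j\<in>{a..b}. 1 / sqrt (v + j)) \<le> 2 * sqrt (u + v)" .
      show ?thesis using 1 2 K0 by (simp add: mult_left_mono)
    qed
    also have "\<dots> = 4 * sqrt 2" unfolding K_def using s0 by simp
    also have "\<dots> \<le> 12"
    proof -
      have "sqrt 2 \<le> sqrt 4" by (rule real_sqrt_le_mono) simp
      hence "sqrt 2 \<le> 2" by (simp add: real_sqrt_four)
      thus ?thesis by simp
    qed
    finally show ?thesis unfolding S by simp
  qed
qed

end
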